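(* For $0\le\alpha<1$ and $r\ge1$, put $P(r)=r^8-2\alpha^4(r^4-1)-1$. Then $P(1)=0$, $P(r)>0$ for $r>1$, and $1$ is the largest real root of $P$ and satisfies $1>\alpha$. Define $t(r)=\int_1^r \frac{s^2\sqrt{s^4-\alpha^4}}{\sqrt{P(s)}}\,ds$, and as functions of $t\ge0$ set $A_1=-\frac{\sqrt{P(r)}}{r\sqrt{r^4-\alpha^4}}$, $A_2=r$, $A_3=-r$, $B=\sqrt{r^2+\alpha^2}$, $C=\sqrt{r^2-\alpha^2}$. Then $(A_1,A_2,A_3,B,C)$ solves on $t>0$ the system $$ \begin{aligned} A_1'&=\tfrac{(A_2-A_3)^2-A_1^2}{A_2A_3}+\tfrac{A_1^2(B^2+C^2)}{B^2C^2},\quad A_2'=\tfrac{A_1^2-A_2^2+A_3^2}{A_1A_3}-\tfrac{B^2+C^2-2A_2^2}{BC},\quad A_3'=\tfrac{A_1^2+A_2^2-A_3^2}{A_1A_2}-\tfrac{B^2+C^2-2A_3^2}{BC},\\ B'&=-\tfrac{CA_1+BA_2+BA_3}{BC}-\tfrac{(C^2-B^2)(A_2+A_3)}{2A_2A_3C},\quad C'=-\tfrac{BA_1+CA_2+CA_3}{BC}-\tfrac{(B^2-C^2)(A_2+A_3)}{2A_2A_3B}, \end{aligned} $$ these functions extend smoothly to $t\in[0,\infty)$, and they satisfy: $A_1(0)=0$, $|A_1'(0)|=4$; $A_2(0)=-A_3(0)\neq0$, $A_2'(0)=A_3'(0)$; $B(0)\ne0$, $B'(0)=0$; $C(0)\neq0$,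 $C'(0)=0$; and each function has constant sign on $(0,\infty)$.
   Context: Primes denote $d/dt$. These are the smoothness conditions at the zero section for a metric $dt^2+A_1^2\eta_1^2+A_2^2\eta_2^2+A_3^2\eta_3^2+B^2(\eta_4^2+\eta_5^2)+C^2(\eta_6^2+\eta_7^2)$ to extend over the complex line bundle obtained by collapsing the circle generated by the first characteristic field of a $3$-Sasakian $7$-manifold. *)

theory Defs
  imports "HOL-Analysis.Analysis"
begin

definition Pfun :: "real \<Rightarrow> real \<Rightarrow> real" where
  "Pfun \<alpha> r = r ^ 8 - 2 * \<alpha> ^ 4 * (r ^ 4 - 1) - 1"

definition tfun :: "real \<Rightarrow> real \<Rightarrow> real" where
  "tfun \<alpha> r = integral {1..r} (\<lambda>s. s ^ 2 * sqrt (s ^ 4 - \<alpha> ^ 4) / sqrt (Pfun \<alpha> s))"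

definition rfun :: "real \<Rightarrow> real \<Rightarrow> real" where
  "rfun \<alpha> t = (THE r. 1 \<le> r \<and> tfun \<alpha> r = t)"

definition A1f :: "real \<Rightarrow> real \<Rightarrow> real" where
  "A1f \<alpha> t = - sqrt (Pfun \<alpha> (rfun \<alpha> t)) / (rfun \<alpha> t * sqrt (rfun \<alpha> t ^ 4 - \<alpha> ^ 4))"

definition A2f :: "real \<Rightarrow> real \<Rightarrow> real" where
  "A2f \<alpha> t = rfun \<alpha> t"

definition A3f :: "real \<Rightarrow> real \<Rightarrow> real" where
  "A3f \<alpha> t = - rfun \<alpha> t"

definition Bf :: "real \<Rightarrow> real \<Rightarrow> real" where
  "Bf \<alpha> t = sqrt (rfun \<alpha> t ^ 2 + \<alpha> ^ 2)"

definition Cf :: "real \<Rightarrow> real \<Rightarrow> real" where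
  "Cf \<alpha> t = sqrt (rfun \<alpha> t ^ 2 - \<alpha> ^ 2)"

definition smooth_on :: "real set \<Rightarrow> (real \<Rightarrow> real) \<Rightarrow> bool" where
  "smooth_on U f \<longleftrightarrow> (\<forall>n. ((deriv ^^ n) f) differentiable_on U)"

definition extends_smoothly_nonneg :: "(real \<Rightarrow> real) \<Rightarrow> bool" where
  "extends_smoothly_nonneg f \<longleftrightarrow>
     (\<exists>g U. open U \<and> {0..} \<subseteq> U \<and> smooth_on U g \<and> (\<forall>t\<ge>0. g t = f t))"

definition const_sign_pos :: "(real \<Rightarrow> real) \<Rightarrow> bool" where
  "const_sign_pos f \<longleftrightarrow> (\<forall>t>0. f t > 0) \<or> (\<forall>t>0. f t < 0)"

end

theory Submission
  imports Defs
begin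


coinductive Cinf :: "(real \<Rightarrow> real) \<Rightarrow> bool" where
  Cinf_intro: "(\<And>x. (f has_real_derivative f' x) (at x)) \<Longrightarrow> Cinf f' \<Longrightarrow> Cinf f"

inductive_set Alg :: "(real \<Rightarrow> real) set \<Rightarrow> (real \<Rightarrow> real) set" for S where
  Alg_base: "f \<in> S \<Longrightarrow> f \<in> Alg S"
| Alg_const: "(\<lambda>x. c) \<in> Alg S"
| Alg_add: "f \<in> Alg S \<Longrightarrow> g \<in> Alg S \<Longrightarrow> (\<lambda>x. f x + g x) \<in> Alg S"
| Alg_mult: "f \<in> Alg S \<Longrightarrow> g \<in> Alg S \<Longrightarrow> (\<lambda>x. f x * g x) \<in> Alg S"

definition DC :: "(real \<Rightarrow> real) set \<Rightarrow> bool" where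
  "DC S \<longleftrightarrow> (\<forall>h\<in>S. \<exists>h'. (\<forall>x. (h has_real_derivative h' x) (at x)) \<and> h' \<in> Alg S)"

lemma Alg_deriv:
  assumes "DC S" and "f \<in> Alg S"
  shows "\<exists>f'. (\<forall>x. (f has_real_derivative f' x) (at x)) \<and> f' \<in> Alg S"
  using assms(2)
proof induction
  case (Alg_base f) then show ?case using assms(1) unfolding DC_def by blast
next
  case (Alg_const c) then show ?case by (intro exI[of _ "\<lambda>x. 0"]) (auto intro: Alg.intros)
next
  case (Alg_add f g)
  then obtain f' g' where "\<forall>x. (f has_real_derivative f' x) (at x)" "f' \<in> Alg S"
     "\<forall>x. (g has_real_derivative g' x) (at x)" "g' \<in> Alg S" by blast
  then show ?case by (intro exI[of _ "\<lambda>x. f' x + g' x"]) (auto intro: Alg.intros derivative_intros)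
next
  case (Alg_mult f g)
  then obtain f' g' where "\<forall>x. (f has_real_derivative f' x) (at x)" "f' \<in> Alg S"
     "\<forall>x. (g has_real_derivative g' x) (at x)" "g' \<in> Alg S" by blast
  then show ?case
    apply (intro exI[of _ "\<lambda>x. f' x * g x + f x * g' x"] conjI allI)
    subgoal for x by (auto intro!: derivative_eq_intros)
    by (rule Alg.intros(3); rule Alg.intros(4)) (use Alg_mult.hyps in auto)
qed

lemma Alg_Cinf:
  assumes "DC S" and "f \<in> Alg S"
  shows "Cinf f"
proof (rule Cinf.coinduct[where X="\<lambda>f. f \<in> Alg S"])
  show "f \<in> Alg S" by (rule assms(2))
next
  fix x assume "x \<in> Alg S"
  then obtain f' where f': "\<forall>y. (x has_real_derivative f' y) (at y)" "f' \<in> Alg S"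
    using Alg_deriv[OF assms(1)] by blast
  show "\<exists>f f'. x = f \<and> (\<forall>y. (f has_real_derivative f' y) (at y)) \<and> (f' \<in> Alg S \<or> Cinf f')"
    by (rule exI[of _ x], rule exI[of _ f']) (use f' in simp)
qed

lemma Cinf_D: "Cinf f \<Longrightarrow> \<exists>f'. (\<forall>x. (f has_real_derivative f' x) (at x)) \<and> Cinf f'"
  by (erule Cinf.cases) blast

lemma Cinf_Alg_step: "Cinf h \<Longrightarrow> Collect Cinf \<subseteq> S \<Longrightarrow> \<exists>h'. (\<forall>x. (h has_real_derivative h' x) (at x)) \<and> h' \<in> Alg S"
proof -
  assume "Cinf h" "Collect Cinf \<subseteq> S"
  then obtain h' where "\<forall>x. (h has_real_derivative h' x) (at x)" "Cinf h'" using Cinf_D by blast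
  then show ?thesis using \<open>Collect Cinf \<subseteq> S\<close> by (blast intro: Alg_base)
qed

lemma DC_Cinf: "DC (Collect Cinf)"
  unfolding DC_def using Cinf_Alg_step by blast

lemma Cinf_const: "Cinf (\<lambda>x. c)"
  by (rule Alg_Cinf[OF DC_Cinf Alg_const])

lemma Cinf_add: "Cinf f \<Longrightarrow> Cinf g \<Longrightarrow> Cinf (\<lambda>x. f x + g x)"
  by (rule Alg_Cinf[OF DC_Cinf]) (auto intro: Alg.intros)

lemma Cinf_mult: "Cinf f \<Longrightarrow> Cinf g \<Longrightarrow> Cinf (\<lambda>x. f x * g x)"
  by (rule Alg_Cinf[OF DC_Cinf]) (auto intro: Alg.intros)

lemma Cinf_id: "Cinf (\<lambda>x. x)"
proof -
  have "DC {\<lambda>x. x}" unfolding DC_def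
    by (auto intro!: exI[of _ "\<lambda>x. 1"] Alg_const)
  then show ?thesis by (rule Alg_Cinf) (auto intro: Alg_base)
qed

lemma Cinf_minus: "Cinf f \<Longrightarrow> Cinf (\<lambda>x. - f x)"
  using Cinf_mult[OF Cinf_const[of "-1"]] by simp

lemma Cinf_diff: "Cinf f \<Longrightarrow> Cinf g \<Longrightarrow> Cinf (\<lambda>x. f x - g x)"
  using Cinf_add[OF _ Cinf_minus] by simp

lemma Cinf_power: "Cinf f \<Longrightarrow> Cinf (\<lambda>x. f x ^ n)"
  by (induction n) (auto intro: Cinf_const Cinf_mult)

lemma Cinf_comp:
  assumes g: "Cinf g" and u: "Cinf u"
  shows "Cinf (\<lambda>x. u (g x))"
proof -
  let ?S = "{v. \<exists>w. Cinf w \<and> v = (\<lambda>x. w (g x))} \<union> Collect Cinf"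
  have "DC ?S" unfolding DC_def
  proof
    fix h assume "h \<in> ?S"
    then show "\<exists>h'. (\<forall>x. (h has_real_derivative h' x) (at x)) \<and> h' \<in> Alg ?S"
    proof
      assume "h \<in> {v. \<exists>w. Cinf w \<and> v = (\<lambda>x. w (g x))}"
      then obtain w where w: "Cinf w" "h = (\<lambda>x. w (g x))" by blast
      obtain w' where w': "\<forall>x. (w has_real_derivative w' x) (at x)" "Cinf w'" using Cinf_D[OF w(1)] by blast
      obtain g' where g': "\<forall>x. (g has_real_derivative g' x) (at x)" "Cinf g'" using Cinf_D[OF g] by blast
      show ?thesis
        apply (intro exI[of _ "\<lambda>x. w' (g x) * g' x"] conjI allI)
        subgoal for x using DERIV_chain2[OF w'(1)[rule_format] g'(1)[rule_format]] w(2) by simp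
        by (rule Alg_mult; rule Alg_base) (use w' g' in auto)
    next
      assume "h \<in> Collect Cinf" then show ?thesis using Cinf_Alg_step by blast
    qed
  qed
  moreover have "(\<lambda>x. u (g x)) \<in> Alg ?S" using u by (auto intro: Alg_base)
  ultimately show ?thesis by (rule Alg_Cinf)
qed

lemma Cinf_inverse:
  assumes f: "Cinf f" and nz: "\<And>x. f x \<noteq> 0"
  shows "Cinf (\<lambda>x. inverse (f x))"
proof -
  let ?S = "{\<lambda>x. inverse (f x)} \<union> Collect Cinf"
  obtain f' where f': "\<forall>x. (f has_real_derivative f' x) (at x)" "Cinf f'" using Cinf_D[OF f] by blast
  have "DC ?S" unfolding DC_def
  proof
    fix h assume "h \<in> ?S"
    then show "\<exists>h'. (\<forall>x. (h has_real_derivative h' x) (at x)) \<and> h' \<in> Alg ?S"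
    proof
      assume "h \<in> {\<lambda>x. inverse (f x)}"
      then have h: "h = (\<lambda>x. inverse (f x))" by simp
      show ?thesis
        apply (intro exI[of _ "\<lambda>x. ((-1) * f' x) * (inverse (f x) * inverse (f x))"] conjI allI)
        subgoal for x unfolding h
          by (rule DERIV_cong[OF DERIV_inverse_fun[OF f'(1)[rule_format] nz]])
             (simp add: power2_eq_square inverse_mult_distrib)
        by (intro Alg_mult Alg_base Alg_const) (use f' in auto)
    next
      assume "h \<in> Collect Cinf" then show ?thesis using Cinf_Alg_step by blast
    qed
  qed
  moreover have "(\<lambda>x. inverse (f x)) \<in> Alg ?S" by (auto intro: Alg_base)
  ultimately show ?thesis by (rule Alg_Cinf)
qed

lemma Cinf_divide: "Cinf f \<Longrightarrow> Cinf g \<Longrightarrow> (\<And>x. g x \<noteq> 0) \<Longrightarrow> Cinf (\<lambda>x. f x / g x)"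
  using Cinf_mult[OF _ Cinf_inverse] by (simp add: divide_inverse)

lemma Cinf_sqrt:
  assumes f: "Cinf f" and pos: "\<And>x. f x > 0"
  shows "Cinf (\<lambda>x. sqrt (f x))"
proof -
  let ?S = "{\<lambda>x. sqrt (f x), \<lambda>x. inverse (sqrt (f x))} \<union> Collect Cinf"
  obtain f' where f': "\<forall>x. (f has_real_derivative f' x) (at x)" "Cinf f'" using Cinf_D[OF f] by blast
  have ds: "((\<lambda>x. sqrt (f x)) has_real_derivative (1/2) * f' x * inverse (sqrt (f x))) (at x)" for x
    by (rule DERIV_cong[OF DERIV_chain2[OF DERIV_real_sqrt[OF pos] f'(1)[rule_format]]]) 
       (simp add: field_simps)
  have nz: "sqrt (f x) \<noteq> 0" for x using pos[of x] by simp
  have "DC ?S" unfolding DC_def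
  proof
    fix h assume "h \<in> ?S"
    then consider "h = (\<lambda>x. sqrt (f x))" | "h = (\<lambda>x. inverse (sqrt (f x)))" | "h \<in> Collect Cinf" by blast
    then show "\<exists>h'. (\<forall>x. (h has_real_derivative h' x) (at x)) \<and> h' \<in> Alg ?S"
    proof cases
      case 1 show ?thesis
        apply (intro exI[of _ "\<lambda>x. (1/2) * f' x * inverse (sqrt (f x))"] conjI allI)
        subgoal for x unfolding 1 by (rule ds)
        by (intro Alg_mult Alg_base Alg_const) (use f' in auto)
    next
      case 2 show ?thesis
        apply (intro exI[of _ "\<lambda>x. ((-1) * ((1/2) * f' x * inverse (sqrt (f x)))) * (inverse (sqrt (f x)) * inverse (sqrt (f x)))"] conjI allI)
        subgoal for x unfolding 2
          by (rule DERIV_cong[OF DERIV_inverse_fun[OF ds nz]])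
             (use pos[of x] in \<open>simp add: power2_eq_square flip: inverse_mult_distrib\<close>)
        by (intro Alg_mult Alg_base Alg_const) (use f' in auto)
    next
      case 3 then show ?thesis using Cinf_Alg_step by blast
    qed
  qed
  moreover have "(\<lambda>x. sqrt (f x)) \<in> Alg ?S" by (auto intro: Alg_base)
  ultimately show ?thesis by (rule Alg_Cinf)
qed

lemma Cinf_invfun:
  assumes H: "Cinf H" and Hpos: "\<And>x. H x > 0"
    and d: "\<And>x. (G has_real_derivative inverse (H (G x))) (at x)"
  shows "Cinf G"
proof -
  let ?S = "{v. \<exists>w. Cinf w \<and> v = (\<lambda>x. w (G x))}"
  have iH: "Cinf (\<lambda>x. inverse (H x))" using Cinf_inverse[OF H] Hpos by (metis less_irrefl)
  have "DC ?S" unfolding DC_def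
  proof
    fix h assume "h \<in> ?S"
    then obtain w where w: "Cinf w" "h = (\<lambda>x. w (G x))" by blast
    obtain w' where w': "\<forall>x. (w has_real_derivative w' x) (at x)" "Cinf w'" using Cinf_D[OF w(1)] by blast
    show "\<exists>h'. (\<forall>x. (h has_real_derivative h' x) (at x)) \<and> h' \<in> Alg ?S"
      apply (intro exI[of _ "\<lambda>x. w' (G x) * inverse (H (G x))"] conjI allI)
      subgoal for x using DERIV_chain2[OF w'(1)[rule_format] d] w(2) by simp
      by (rule Alg_mult; rule Alg_base) (use w' iH in auto)
  qed
  moreover have "G \<in> Alg ?S" using Cinf_id by (auto intro!: Alg_base)
  ultimately show ?thesis by (rule Alg_Cinf)
qed

lemma Cinf_smooth: assumes "Cinf f" shows "smooth_on U f"
proof -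
  have "Cinf ((deriv ^^ n) f)" for n
  proof (induction n)
    case 0 then show ?case using assms by simp
  next
    case (Suc n)
    obtain f' where f': "\<forall>x. ((deriv ^^ n) f has_real_derivative f' x) (at x)" "Cinf f'"
      using Cinf_D[OF Suc] by blast
    have "deriv ((deriv ^^ n) f) = f'" using f'(1) by (auto intro!: ext DERIV_imp_deriv)
    then show ?case using f'(2) by simp
  qed
  moreover have "Cinf g \<Longrightarrow> g differentiable_on U" for g
  proof -
    assume "Cinf g"
    then obtain g' where "\<forall>x. (g has_real_derivative g' x) (at x)" using Cinf_D by blast
    then show ?thesis by (auto simp: differentiable_on_def real_differentiable_def intro: has_field_derivative_at_within)
  qed
  ultimately show ?thesis unfolding smooth_on_def by blast
qed



lemma Cinf_cont: "Cinf f \<Longrightarrow> continuous_on S f"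
proof -
  assume "Cinf f"
  then obtain f' where "\<forall>x. (f has_real_derivative f' x) (at x)" using Cinf_D by blast
  then show ?thesis by (meson DERIV_isCont continuous_at_imp_continuous_on)
qed

locale sas =
  fixes a :: real
  assumes a0: "0 \<le> a" and a1: "a < 1"
begin

definition Q :: "real \<Rightarrow> real" where "Q s = (s+1) * (s^2+1) * (s^4+1-2 * a^4)"
definition H :: "real \<Rightarrow> real" where
  "H v = 2 * (1+v^2)^2 * sqrt((1+v^2)^4 - a^4)/sqrt(Q(1+v^2))"
definition T :: "real \<Rightarrow> real" where "T v = integral {0..v} H - integral {v..0} H"

lemma a4: "a^4 < 1" "0 \<le> a^4"
  using power_strict_mono[of a 1 4] a0 a1 by auto

lemma s4: "1 \<le> s \<Longrightarrow> 1 \<le> s^4" for s :: real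
  by (simp add: one_le_power)

lemma Q_pos: "1 \<le> s \<Longrightarrow> 0 < Q s"
proof -
  assume s: "1 \<le> s"
  have "0 < s^4+1-2 * a^4" using s4[OF s] a4 by linarith
  moreover have "0 < (s+1) * (s^2+1)" using s by (simp add: add_pos_nonneg)
  ultimately show ?thesis unfolding Q_def by simp
qed

lemma b_pos: "1 \<le> s \<Longrightarrow> 0 < s^4 - a^4"
  using s4[of s] a4 by linarith

lemma P_eq: "Pfun a s = (s - 1) * Q s"
  unfolding Pfun_def Q_def by algebra

lemma H_pos: "0 < H v"
proof -
  have "1 \<le> 1 + v^2" by simp
  then have "0 < Q (1+v^2)" "0 < (1+v^2)^4 - a^4" using Q_pos b_pos by auto
  then show ?thesis unfolding H_def by (intro divide_pos_pos mult_pos_pos) (auto simp: add_pos_nonneg)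
qed

lemma H_ge: "1/2 \<le> H v"
proof -
  define s where "s = 1 + v^2"
  have s: "1 \<le> s" unfolding s_def by simp
  have s4': "1 \<le> s^4" using s4[OF s] .
  have bp: "0 < s^4 - a^4" using b_pos[OF s] .
  have Qp: "0 < Q s" using Q_pos[OF s] .
  have Hs: "H v = 2 * s^2 * sqrt(s^4 - a^4)/sqrt(Q s)" unfolding H_def s_def ..
  have bq: "Q s \<le> ((s+1) * (s^2+1)) * (2 * (s^4 - a^4))"
  proof -
    have "s^4+1-2 * a^4 \<le> 2 * (s^4 - a^4)" using s4' by simp
    moreover have "0 \<le> (s+1) * (s^2+1)" using s by simp
    ultimately show ?thesis unfolding Q_def by (simp add: mult_left_mono)
  qed
  have c1: "(s+1) * (s^2+1) \<le> (2 * s) * (2 * s^2)"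
  proof -
    have "s+1 \<le> 2 * s" using s by simp
    moreover have "1 \<le> s^2" using s by (simp add: one_le_power)
    then have "s^2+1 \<le> 2 * s^2" by simp
    ultimately show ?thesis by (intro mult_mono) (use s in auto)
  qed
  have c2: "(2 * s) * (2 * s^2) \<le> 4 * s^4"
  proof -
    have "s^3 \<le> s^4" using s by (simp add: power_increasing)
    moreover have "(2 * s) * (2 * s^2) = 4 * s^3" by (simp add: power2_eq_square power3_eq_cube)
    ultimately show ?thesis by simp
  qed
  have "((s+1) * (s^2+1)) * (2 * (s^4 - a^4)) \<le> (4 * s^4) * (2 * (s^4 - a^4))"
    by (rule mult_right_mono[OF order.trans[OF c1 c2]]) (use bp in simp)
  with bq have q16: "Q s \<le> (4 * s^4) * (2 * (s^4 - a^4))" by (rule order.trans)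
  have Hsq: "(H v)^2 = 4 * s^4 * (s^4 - a^4)/Q s"
    unfolding Hs using bp Qp by (simp add: power_divide power_mult_distrib flip: power_mult)
  have "1/4 \<le> 4 * s^4 * (s^4 - a^4)/Q s"
    using q16 Qp by (simp add: field_simps)
  then have "(1/2)^2 \<le> (H v)^2" unfolding Hsq by (simp add: power2_eq_square)
  then show ?thesis by (rule power2_le_imp_le) (use H_pos[of v] in simp)
qed

lemma Cinf_H: "Cinf H"
proof -
  have s: "Cinf (\<lambda>v. 1 + v^2)" by (intro Cinf_add Cinf_const Cinf_power Cinf_id)
  have sge: "1 \<le> 1 + v^2" for v :: real by simp
  have Qc: "Cinf (\<lambda>v. Q (1 + v^2))" unfolding Q_def
    by (intro Cinf_mult Cinf_add Cinf_diff Cinf_const Cinf_power s)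
  have Qp: "0 < Q (1 + v^2)" for v using Q_pos sge by blast
  have Qnz: "Q (1 + v^2) \<noteq> 0" for v using Qp[of v] by simp
  have bp: "0 < (1 + v^2)^4 - a^4" for v using b_pos sge by blast
  show ?thesis unfolding H_def[abs_def]
    by (intro Cinf_divide Cinf_mult Cinf_const Cinf_power s Cinf_sqrt Cinf_diff Qc)
       (use bp in \<open>auto simp: Qp Qnz\<close>)
qed

lemma H_cont: "continuous_on S H" by (rule Cinf_cont[OF Cinf_H])

lemma T_deriv: "(T has_real_derivative H x) (at x)"
proof -
  define m where "m = min x 0 - 1"
  define M where "M = max x 0 + 1"
  have eq: "T v = integral {m..v} H - integral {m..0} H" if "v \<in> {m<..<M}" for v
  proof (cases "0 \<le> v")
    case True
    have "integral {m..0} H + integral {0..v} H = integral {m..v} H"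
      by (rule Henstock_Kurzweil_Integration.integral_combine) (use True m_def in \<open>auto intro: integrable_continuous_real H_cont\<close>)
    moreover have "integral {v..0} H = 0"
      using True by (cases "v = 0") auto
    ultimately show ?thesis unfolding T_def by simp
  next
    case False
    have "integral {m..v} H + integral {v..0} H = integral {m..0} H"
      by (rule Henstock_Kurzweil_Integration.integral_combine) (use False that m_def in \<open>auto intro: integrable_continuous_real H_cont\<close>)
    moreover have "integral {0..v} H = 0" using False by simp
    ultimately show ?thesis unfolding T_def by simp
  qed
  have "((\<lambda>v. integral {m..v} H) has_real_derivative H x) (at x within {m..M})"
    by (rule integral_has_real_derivative) (use m_def M_def in \<open>auto intro: H_cont\<close>)
  moreover have "at x within {m..M} = at x" by (rule at_within_Icc_at) (auto simp: m_def M_def)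
  ultimately have "((\<lambda>v. integral {m..v} H - integral {m..0} H) has_real_derivative H x) (at x)"
    by (auto intro!: derivative_eq_intros)
  then show ?thesis
    by (rule has_field_derivative_transform_within_open[where S="{m<..<M}"])
       (use eq m_def M_def in auto)
qed

lemma T0: "T 0 = 0" unfolding T_def by simp

lemma T_cont: "isCont T x" using T_deriv DERIV_isCont by blast

lemma T_less: "x < y \<Longrightarrow> T x < T y"
  by (rule DERIV_pos_imp_increasing[of x y T]) (use T_deriv H_pos in blast)+

lemma T_inj: "inj T"
  by (rule injI) (metis T_less linorder_neqE_linordered_idom less_irrefl)

lemma T_lower: "0 \<le> v \<Longrightarrow> v/2 \<le> T v"
proof -
  assume v: "0 \<le> v"
  have "(\<lambda>v. T v - v/2) 0 \<le> (\<lambda>v. T v - v/2) v"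
    apply (rule DERIV_nonneg_imp_nondecreasing[OF v])
    subgoal for x
      apply (rule exI[of _ "H x - 1/2"])
      using H_ge[of x] by (auto intro!: derivative_eq_intros T_deriv)
    done
  then show ?thesis by (simp add: T0)
qed

lemma T_upper: "v \<le> 0 \<Longrightarrow> T v \<le> v/2"
proof -
  assume v: "v \<le> 0"
  have "(\<lambda>v. T v - v/2) v \<le> (\<lambda>v. T v - v/2) 0"
    apply (rule DERIV_nonneg_imp_nondecreasing[OF v])
    subgoal for x
      apply (rule exI[of _ "H x - 1/2"])
      using H_ge[of x] by (auto intro!: derivative_eq_intros T_deriv)
    done
  then show ?thesis by (simp add: T0)
qed

lemma T_surj: "surj T"
proof -
  have "\<exists>x. T x = y" for y
  proof (cases "0 \<le> y")
    case True
    have "T 0 \<le> y" "y \<le> T (2 * y)" using T0 True T_lower[of "2 * y"] by auto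
    then show ?thesis using IVT[of T 0 y "2 * y"] T_cont True by auto
  next
    case False
    have "T (2 * y) \<le> y" "y \<le> T 0" using T0 False T_upper[of "2 * y"] by auto
    then show ?thesis using IVT[of T "2 * y" y 0] T_cont False by auto
  qed
  then show ?thesis by (metis surjI)
qed

definition Ti :: "real \<Rightarrow> real" where "Ti = inv T"

lemma T_Ti: "T (Ti y) = y" unfolding Ti_def by (rule surj_f_inv_f[OF T_surj])
lemma Ti_T: "Ti (T x) = x" unfolding Ti_def by (rule inv_f_f[OF T_inj])

lemma Ti0: "Ti 0 = 0" using Ti_T[of 0] T0 by simp

lemma Ti_pos: "0 < t \<Longrightarrow> 0 < Ti t"
  by (metis T0 T_Ti T_less not_less_iff_gr_or_eq less_asym)

lemma Ti_nonneg: "0 \<le> t \<Longrightarrow> 0 \<le> Ti t"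
  using Ti_pos Ti0 by (metis less_eq_real_def)

lemma Ti_deriv: "(Ti has_real_derivative inverse (H (Ti y))) (at y)"
proof (rule DERIV_inverse_function[where f=T and a="y-1" and b="y+1"])
  show "DERIV T (Ti y) :> H (Ti y)" by (rule T_deriv)
  show "H (Ti y) \<noteq> 0" using H_pos by (metis less_irrefl)
  show "T (Ti z) = z" for z by (rule T_Ti)
  have "isCont Ti (T (Ti y))"
    by (rule isCont_inverse_function[where d=1]) (auto simp: Ti_T T_cont)
  then show "isCont Ti y" by (simp add: T_Ti)
qed auto

lemma Cinf_Ti: "Cinf Ti"
  by (rule Cinf_invfun[OF Cinf_H H_pos Ti_deriv])

end


context sas begin

lemma sqrt_deriv_sub1: "1 < x \<Longrightarrow> ((\<lambda>s. sqrt (s - 1)) has_real_derivative inverse (sqrt (x - 1)) / 2) (at x)"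
proof -
  assume x: "1 < x"
  have d: "DERIV sqrt (x-1) :> inverse (sqrt (x-1))/2" using x by (intro DERIV_real_sqrt) simp
  have "((\<lambda>s. sqrt (s - 1)) has_real_derivative inverse (sqrt (x - 1)) / 2 * 1) (at x)"
    by (rule DERIV_chain2[where g="\<lambda>s. s - 1", OF d]) (auto intro!: derivative_eq_intros)
  then show ?thesis by simp
qed

lemma integrand_eq:
  assumes x: "1 < x"
  shows "x^2 * sqrt (x^4 - a^4) / sqrt (Pfun a x) = (inverse (sqrt (x - 1)) / 2) *\<^sub>R H (sqrt (x - 1))"
proof -
  have x1: "1 \<le> x" using x by simp
  have sq: "(sqrt (x - 1))^2 = x - 1" using x by simp
  have Hx: "H (sqrt (x - 1)) = 2 * x^2 * sqrt (x^4 - a^4) / sqrt (Q x)"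
    unfolding H_def sq by simp
  have P: "sqrt (Pfun a x) = sqrt (x - 1) * sqrt (Q x)" unfolding P_eq by (simp add: real_sqrt_mult)
  have "0 < sqrt (x - 1)" "0 < sqrt (Q x)" using x Q_pos[OF x1] by auto
  then show ?thesis unfolding Hx P by (simp add: field_simps)
qed

lemma tfun_T:
  assumes r: "1 \<le> r"
  shows "tfun a r = T (sqrt (r - 1))"
proof -
  let ?g = "\<lambda>s. sqrt (s - 1)"
  let ?g' = "\<lambda>s. inverse (sqrt (s - 1)) / 2"
  have sub: "((\<lambda>x. ?g' x *\<^sub>R H (?g x)) has_integral (integral {?g 1..?g r} H - integral {?g r..?g 1} H)) {1..r}"
  proof (rule has_integral_substitution_general[where s="{1}" and c=0 and d="sqrt (r-1)"])
    show "finite {1::real}" by simp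
    show "1 \<le> r" by (rule r)
    show "?g ` {1..r} \<subseteq> {0..sqrt (r-1)}" by (auto simp: real_sqrt_le_mono)
    show "continuous_on {0..sqrt (r-1)} H" by (rule H_cont)
    show "continuous_on {1..r} ?g" by (intro continuous_intros)
    fix x assume "x \<in> {1..r} - {1}"
    then have x: "1 < x" by auto
    show "(?g has_field_derivative ?g' x) (at x within {1..r})"
      by (rule has_field_derivative_at_within[OF sqrt_deriv_sub1[OF x]])
  qed
  have "integral {?g 1..?g r} H - integral {?g r..?g 1} H = T (sqrt (r - 1))" by (simp add: T_def)
  with sub have sub': "((\<lambda>x. ?g' x *\<^sub>R H (?g x)) has_integral T (sqrt (r - 1))) {1..r}" by simp
  have "((\<lambda>s. s ^ 2 * sqrt (s ^ 4 - a ^ 4) / sqrt (Pfun a s)) has_integral T (sqrt (r - 1))) {1..r}"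
    by (rule has_integral_spike_finite[where S="{1}", OF _ _ sub']) (auto simp: integrand_eq)
  then show ?thesis unfolding tfun_def by (rule integral_unique)
qed

definition R :: "real \<Rightarrow> real" where "R t = 1 + (Ti t)^2"

lemma R_ge: "1 \<le> R t" unfolding R_def by simp

lemma tfun_R: "0 \<le> t \<Longrightarrow> tfun a (R t) = t"
  using tfun_T[OF R_ge[of t]] Ti_nonneg[of t] by (simp add: R_def T_Ti)

lemma rfun_R: assumes t: "0 \<le> t" shows "rfun a t = R t"
  unfolding rfun_def
proof (rule the_equality)
  show "1 \<le> R t \<and> tfun a (R t) = t" using R_ge tfun_R[OF t] by simp
  fix r assume r: "1 \<le> r \<and> tfun a r = t"
  then have "T (sqrt (r - 1)) = t" using tfun_T[of r] by simp
  then have "sqrt (r - 1) = Ti t" using Ti_T by metis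
  then have "(sqrt (r - 1))^2 = (Ti t)^2" by simp
  then show "r = R t" using r by (simp add: R_def)
qed

lemma tfun_bij: "bij_betw (tfun a) {1..} {0..}"
  unfolding bij_betw_def
proof
  show "inj_on (tfun a) {1..}"
  proof (rule inj_onI)
    fix x y assume x: "x \<in> {1..}" and y: "y \<in> {1..}" and e: "tfun a x = tfun a y"
    then have "T (sqrt (x - 1)) = T (sqrt (y - 1))" using tfun_T by simp
    then have "sqrt (x - 1) = sqrt (y - 1)" using T_inj by (meson injD)
    then show "x = y" using x y by simp
  qed
  show "tfun a ` {1..} = {0..}"
  proof
    show "tfun a ` {1..} \<subseteq> {0..}"
    proof
      fix y assume "y \<in> tfun a ` {1..}"
      then obtain x where x: "1 \<le> x" "y = tfun a x" by auto
      then have "y = T (sqrt (x - 1))" using tfun_T by simp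
      moreover have "sqrt (x - 1) / 2 \<le> T (sqrt (x - 1))" by (rule T_lower) (use x in simp)
      moreover have "0 \<le> sqrt (x - 1)" using x by simp
      ultimately have "0 \<le> y" by linarith
      then show "y \<in> {0..}" by simp
    qed
    show "{0..} \<subseteq> tfun a ` {1..}"
    proof
      fix t :: real assume "t \<in> {0..}"
      then have "t = tfun a (R t)" using tfun_R by simp
      then show "t \<in> tfun a ` {1..}" using R_ge by auto
    qed
  qed
qed

end


lemma alg1:
  fixes r p b a :: real
  assumes r: "0 < r" and p: "0 < p" and b: "0 < b" and hb: "b^2 = r^4 - a^4"
  shows "(- (inverse p / 2 * (8 * r^7 - 8 * a^4 * r^3)) * (r * b) - (- p) * (1 * b + inverse b / 2 * (4 * r^3) * r)) / ((r * b) * (r * b)) * (p / (r^2 * b))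
     = ((r - - r)^2 - (- p / (r * b))^2) / (r * - r) + (- p / (r * b))^2 * ((r^2 + a^2) + (r^2 - a^2)) / ((r^2 + a^2) * (r^2 - a^2))"
proof -
  have e1: "8 * r^7 - 8 * a^4 * r^3 = 8 * r^3 * b^2" unfolding hb by algebra
  have e2: "(r^2 + a^2) * (r^2 - a^2) = b^2" unfolding hb by algebra
  have e3: "(r^2 + a^2) + (r^2 - a^2) = 2 * r^2" by simp
  show ?thesis unfolding e1 e2 e3 using r p b
    by (simp add: field_simps) algebra
qed

context sas begin

definition K :: "real \<Rightarrow> real" where "K r = sqrt (Q r) / (r * sqrt (r^4 - a^4))"
definition g1 :: "real \<Rightarrow> real" where "g1 t = - (Ti t * K (R t))"
definition gB :: "real \<Rightarrow> real" where "gB t = sqrt ((R t)^2 + a^2)"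
definition gC :: "real \<Rightarrow> real" where "gC t = sqrt ((R t)^2 - a^2)"

lemma a2: "a^2 < 1" using a0 a1 power_strict_mono[of a 1 2] by auto

lemma rC_pos: "1 \<le> r \<Longrightarrow> 0 < r^2 - a^2"
proof -
  assume "1 \<le> r" then have "1 \<le> r^2" by (simp add: one_le_power)
  then show ?thesis using a2 by linarith
qed

lemma rB_pos: "0 < r^2 + a^2" if "1 \<le> r" for r :: real
  using that by (simp add: add_pos_nonneg)

lemma K_pos: "1 \<le> r \<Longrightarrow> 0 < K r"
  unfolding K_def using Q_pos b_pos by (intro divide_pos_pos mult_pos_pos) auto

lemma Cinf_R: "Cinf R"
  unfolding R_def[abs_def] by (intro Cinf_add Cinf_const Cinf_power Cinf_Ti)

lemma Cinf_KR: "Cinf (\<lambda>t. K (R t))"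
proof -
  have QR: "Cinf (\<lambda>t. Q (R t))" unfolding Q_def
    by (intro Cinf_mult Cinf_add Cinf_diff Cinf_const Cinf_power Cinf_R)
  have bR: "Cinf (\<lambda>t. (R t)^4 - a^4)" by (intro Cinf_diff Cinf_power Cinf_const Cinf_R)
  have p1: "0 < Q (R t)" for t using Q_pos R_ge by blast
  have p2: "0 < (R t)^4 - a^4" for t using b_pos R_ge by blast
  have p3: "R t * sqrt ((R t)^4 - a^4) \<noteq> 0" for t using p2[of t] R_ge[of t] by simp
  show ?thesis unfolding K_def
    by (intro Cinf_divide Cinf_sqrt Cinf_mult QR bR Cinf_R p1 p2 p3)
qed

lemma Cinf_g1: "Cinf g1"
  unfolding g1_def[abs_def] by (intro Cinf_minus Cinf_mult Cinf_Ti Cinf_KR)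

lemma Cinf_gB: "Cinf gB"
  unfolding gB_def[abs_def] by (intro Cinf_sqrt Cinf_add Cinf_power Cinf_const Cinf_R rB_pos R_ge)

lemma Cinf_gC: "Cinf gC"
  unfolding gC_def[abs_def] by (intro Cinf_sqrt Cinf_diff Cinf_power Cinf_const Cinf_R rC_pos R_ge)

lemma Cinf_mR: "Cinf (\<lambda>t. - R t)" by (intro Cinf_minus Cinf_R)

lemma sqrtP: "0 \<le> t \<Longrightarrow> sqrt (Pfun a (R t)) = Ti t * sqrt (Q (R t))"
proof -
  assume t: "0 \<le> t"
  have "Pfun a (R t) = (Ti t)^2 * Q (R t)" unfolding P_eq by (simp add: R_def)
  then show ?thesis using Ti_nonneg[OF t] by (simp add: real_sqrt_mult)
qed

lemma A1_eq: "0 \<le> t \<Longrightarrow> A1f a t = g1 t"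
  unfolding A1f_def g1_def K_def by (simp add: rfun_R sqrtP)

lemma A2_eq: "0 \<le> t \<Longrightarrow> A2f a t = R t"
  unfolding A2f_def by (simp add: rfun_R)

lemma A3_eq: "0 \<le> t \<Longrightarrow> A3f a t = - R t"
  unfolding A3f_def by (simp add: rfun_R)

lemma B_eq: "0 \<le> t \<Longrightarrow> Bf a t = gB t"
  unfolding Bf_def gB_def by (simp add: rfun_R)

lemma C_eq: "0 \<le> t \<Longrightarrow> Cf a t = gC t"
  unfolding Cf_def gC_def by (simp add: rfun_R)

lemma ext_smooth: "Cinf g \<Longrightarrow> (\<And>t. 0 \<le> t \<Longrightarrow> g t = f t) \<Longrightarrow> extends_smoothly_nonneg f"
  unfolding extends_smoothly_nonneg_def
  by (rule exI[of _ g], rule exI[of _ UNIV]) (auto intro: Cinf_smooth)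

lemma dR: "(R has_real_derivative 2 * Ti t * inverse (H (Ti t))) (at t)"
  unfolding R_def[abs_def] by (auto intro!: derivative_eq_intros Ti_deriv)

lemma dR0: "(R has_real_derivative 0) (at 0)"
  using dR[of 0] by (simp add: Ti0)

lemma chain_rfun:
  assumes t: "0 < t" and F: "(F has_real_derivative D) (at (R t))"
  shows "((\<lambda>s. F (rfun a s)) has_real_derivative D * (2 * Ti t * inverse (H (Ti t)))) (at t)"
proof -
  have "((\<lambda>s. F (R s)) has_real_derivative D * (2 * Ti t * inverse (H (Ti t)))) (at t)"
    by (rule DERIV_chain2[where g=R and x=t, OF F dR])
  then show ?thesis
    by (rule has_field_derivative_transform_within_open[where S="{0<..}"]) (use t rfun_R in auto)
qed

lemma Rprime:
  assumes t: "0 < t"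
  shows "2 * Ti t * inverse (H (Ti t)) = sqrt (Pfun a (R t)) / ((R t)^2 * sqrt ((R t)^4 - a^4))"
proof -
  define w where "w = Ti t"
  define r where "r = R t"
  have w: "0 < w" unfolding w_def using Ti_pos[OF t] .
  have r1: "1 \<le> r" unfolding r_def by (rule R_ge)
  have rw: "1 + w^2 = r" unfolding r_def w_def R_def ..
  have Hw: "H w = 2 * r^2 * sqrt (r^4 - a^4) / sqrt (Q r)" unfolding H_def rw ..
  have sP: "sqrt (Pfun a r) = w * sqrt (Q r)" unfolding r_def w_def using sqrtP t by simp
  have "0 < sqrt (Q r)" "0 < sqrt (r^4 - a^4)" using Q_pos[OF r1] b_pos[OF r1] by auto
  then show ?thesis
    unfolding w_def[symmetric] r_def[symmetric] Hw sP using r1 by (simp add: field_simps)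
qed

lemma dF1:
  assumes r: "1 < r"
  shows "((\<lambda>r. - sqrt (Pfun a r) / (r * sqrt (r ^ 4 - a ^ 4))) has_real_derivative
     (- (inverse (sqrt (Pfun a r)) / 2 * (8 * r^7 - 8 * a^4 * r^3)) * (r * sqrt (r ^ 4 - a ^ 4))
       - (- sqrt (Pfun a r)) * (1 * sqrt (r ^ 4 - a ^ 4) + inverse (sqrt (r ^ 4 - a ^ 4)) / 2 * (4 * r^3) * r))
     / ((r * sqrt (r ^ 4 - a ^ 4)) * (r * sqrt (r ^ 4 - a ^ 4)))) (at r)"
proof -
  have r1: "1 \<le> r" using r by simp
  have Pp: "0 < Pfun a r" unfolding P_eq using r Q_pos[OF r1] by simp
  have bp: "0 < r^4 - a^4" using b_pos[OF r1] .
  have dP: "((\<lambda>r. Pfun a r) has_real_derivative 8 * r^7 - 8 * a^4 * r^3) (at r)"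
    unfolding Pfun_def by (auto intro!: derivative_eq_intros simp: algebra_simps)
  have dsP: "((\<lambda>r. sqrt (Pfun a r)) has_real_derivative inverse (sqrt (Pfun a r)) / 2 * (8 * r^7 - 8 * a^4 * r^3)) (at r)"
    by (rule DERIV_chain2[where g="\<lambda>r. Pfun a r", OF DERIV_real_sqrt[OF Pp] dP])
  have dnum: "((\<lambda>r. - sqrt (Pfun a r)) has_real_derivative - (inverse (sqrt (Pfun a r)) / 2 * (8 * r^7 - 8 * a^4 * r^3))) (at r)"
    by (rule DERIV_minus[OF dsP])
  have db0: "((\<lambda>r. r^4 - a^4) has_real_derivative 4 * r^3) (at r)"
    by (auto intro!: derivative_eq_intros)
  have db: "((\<lambda>r. sqrt (r^4 - a^4)) has_real_derivative inverse (sqrt (r^4 - a^4)) / 2 * (4 * r^3)) (at r)"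
    by (rule DERIV_chain2[where g="\<lambda>r. r^4 - a^4", OF DERIV_real_sqrt[OF bp] db0])
  have dden: "((\<lambda>r. r * sqrt (r^4 - a^4)) has_real_derivative 1 * sqrt (r ^ 4 - a ^ 4) + inverse (sqrt (r ^ 4 - a ^ 4)) / 2 * (4 * r^3) * r) (at r)"
    by (rule DERIV_mult[OF DERIV_ident db])
  have nz: "r * sqrt (r^4 - a^4) \<noteq> 0" using r bp by simp
  show ?thesis by (rule DERIV_divide[OF dnum dden nz])
qed

lemma dFB: "0 < r \<Longrightarrow> ((\<lambda>r. sqrt (r^2 + a^2)) has_real_derivative r / sqrt (r^2 + a^2)) (at r)"
proof -
  assume r: "0 < r"
  have p: "0 < r^2 + a^2" using r by (simp add: add_pos_nonneg)
  have d0: "((\<lambda>r. r^2 + a^2) has_real_derivative 2 * r) (at r)" by (auto intro!: derivative_eq_intros)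
  show ?thesis
    by (rule DERIV_cong[OF DERIV_chain2[where g="\<lambda>r. r^2 + a^2", OF DERIV_real_sqrt[OF p] d0]])
       (simp add: field_simps)
qed

lemma dFC: "1 \<le> r \<Longrightarrow> ((\<lambda>r. sqrt (r^2 - a^2)) has_real_derivative r / sqrt (r^2 - a^2)) (at r)"
proof -
  assume r: "1 \<le> r"
  have p: "0 < r^2 - a^2" using rC_pos[OF r] .
  have d0: "((\<lambda>r. r^2 - a^2) has_real_derivative 2 * r) (at r)" by (auto intro!: derivative_eq_intros)
  show ?thesis
    by (rule DERIV_cong[OF DERIV_chain2[where g="\<lambda>r. r^2 - a^2", OF DERIV_real_sqrt[OF p] d0]])
       (simp add: field_simps)
qed

end


context sas begin

lemma ode:
  assumes t: "0 < t"
  shows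
   "(A1f a has_real_derivative
            ((A2f a t - A3f a t)\<^sup>2 - (A1f a t)\<^sup>2) / (A2f a t * A3f a t)
            + (A1f a t)\<^sup>2 * ((Bf a t)\<^sup>2 + (Cf a t)\<^sup>2) / ((Bf a t)\<^sup>2 * (Cf a t)\<^sup>2)) (at t) \<and>
    (A2f a has_real_derivative
            ((A1f a t)\<^sup>2 - (A2f a t)\<^sup>2 + (A3f a t)\<^sup>2) / (A1f a t * A3f a t)
            - ((Bf a t)\<^sup>2 + (Cf a t)\<^sup>2 - 2 * (A2f a t)\<^sup>2) / (Bf a t * Cf a t)) (at t) \<and>
    (A3f a has_real_derivative
            ((A1f a t)\<^sup>2 + (A2f a t)\<^sup>2 - (A3f a t)\<^sup>2) / (A1f a t * A2f a t)
            - ((Bf a t)\<^sup>2 + (Cf a t)\<^sup>2 - 2 * (A3f a t)\<^sup>2) / (Bf a t * Cf a t)) (at t) \<and>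
    (Bf a has_real_derivative
            - (Cf a t * A1f a t + Bf a t * A2f a t + Bf a t * A3f a t) / (Bf a t * Cf a t)
            - ((Cf a t)\<^sup>2 - (Bf a t)\<^sup>2) * (A2f a t + A3f a t) / (2 * A2f a t * A3f a t * Cf a t)) (at t) \<and>
    (Cf a has_real_derivative
            - (Bf a t * A1f a t + Cf a t * A2f a t + Cf a t * A3f a t) / (Bf a t * Cf a t)
            - ((Bf a t)\<^sup>2 - (Cf a t)\<^sup>2) * (A2f a t + A3f a t) / (2 * A2f a t * A3f a t * Bf a t)) (at t)"
proof -
  define r where "r = R t"
  define p where "p = sqrt (Pfun a r)"
  define b where "b = sqrt (r^4 - a^4)"
  define Bv where "Bv = sqrt (r^2 + a^2)"
  define Cv where "Cv = sqrt (r^2 - a^2)"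
  have w: "0 < Ti t" using Ti_pos[OF t] .
  have r1: "1 < r" unfolding r_def R_def using w by simp
  have r1': "1 \<le> r" using r1 by simp
  have rf: "rfun a t = r" unfolding r_def using t by (simp add: rfun_R)
  have pp: "0 < p" unfolding p_def P_eq using r1 Q_pos[OF r1'] by simp
  have bp: "0 < b" unfolding b_def using b_pos[OF r1'] by simp
  have hb: "b^2 = r^4 - a^4" unfolding b_def using b_pos[OF r1'] by simp
  have Bp: "0 < Bv" unfolding Bv_def using rB_pos[OF r1'] by simp
  have Cp: "0 < Cv" unfolding Cv_def using rC_pos[OF r1'] by simp
  have hB: "Bv^2 = r^2 + a^2" unfolding Bv_def using rB_pos[OF r1'] by simp
  have hC: "Cv^2 = r^2 - a^2" unfolding Cv_def using rC_pos[OF r1'] by simp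
  have Rp: "2 * Ti t * inverse (H (Ti t)) = p / (r^2 * b)"
    unfolding p_def b_def r_def by (rule Rprime[OF t])
  have eA1: "A1f a t = - p / (r * b)" unfolding A1f_def rf p_def b_def ..
  have eA2: "A2f a t = r" unfolding A2f_def rf ..
  have eA3: "A3f a t = - r" unfolding A3f_def rf ..
  have eB: "Bf a t = Bv" unfolding Bf_def rf Bv_def ..
  have eC: "Cf a t = Cv" unfolding Cf_def rf Cv_def ..
  have fA1: "A1f a = (\<lambda>s. (\<lambda>r. - sqrt (Pfun a r) / (r * sqrt (r ^ 4 - a ^ 4))) (rfun a s))"
    by (rule ext) (simp add: A1f_def)
  have fA2: "A2f a = (\<lambda>s. (\<lambda>r. r) (rfun a s))" by (rule ext) (simp add: A2f_def)
  have fA3: "A3f a = (\<lambda>s. (\<lambda>r. - r) (rfun a s))" by (rule ext) (simp add: A3f_def)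
  have fB: "Bf a = (\<lambda>s. (\<lambda>r. sqrt (r^2 + a^2)) (rfun a s))" by (rule ext) (simp add: Bf_def)
  have fC: "Cf a = (\<lambda>s. (\<lambda>r. sqrt (r^2 - a^2)) (rfun a s))" by (rule ext) (simp add: Cf_def)
  have d1: "(A1f a has_real_derivative
     (- (inverse p / 2 * (8 * r^7 - 8 * a^4 * r^3)) * (r * b) - (- p) * (1 * b + inverse b / 2 * (4 * r^3) * r)) / ((r * b) * (r * b)) * (p / (r^2 * b))) (at t)"
    unfolding fA1 using chain_rfun[OF t dF1[OF r1[unfolded r_def]]] unfolding Rp r_def[symmetric] p_def b_def .
  have d2: "(A2f a has_real_derivative 1 * (p / (r^2 * b))) (at t)"
    unfolding fA2 using chain_rfun[OF t DERIV_ident] unfolding Rp .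
  have d3: "(A3f a has_real_derivative -1 * (p / (r^2 * b))) (at t)"
    unfolding fA3 using chain_rfun[OF t DERIV_minus[OF DERIV_ident]] unfolding Rp .
  have dB: "(Bf a has_real_derivative r / Bv * (p / (r^2 * b))) (at t)"
    unfolding fB using chain_rfun[OF t dFB[of "R t"]] R_ge[of t] unfolding Rp r_def[symmetric] Bv_def
    by simp
  have dC: "(Cf a has_real_derivative r / Cv * (p / (r^2 * b))) (at t)"
    unfolding fC using chain_rfun[OF t dFC[OF R_ge[of t]]] unfolding Rp r_def[symmetric] Cv_def .
  have rp: "0 < r" using r1 by simp
  show ?thesis
    unfolding eA1 eA2 eA3 eB eC
  proof (intro conjI)
    show "(A1f a has_real_derivative ((r - - r)\<^sup>2 - (- p / (r * b))\<^sup>2) / (r * - r) +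
        (- p / (r * b))\<^sup>2 * (Bv\<^sup>2 + Cv\<^sup>2) / (Bv\<^sup>2 * Cv\<^sup>2)) (at t)"
      unfolding hB hC by (rule DERIV_cong[OF d1 alg1[OF rp pp bp hb]])
    show "(A2f a has_real_derivative ((- p / (r * b))\<^sup>2 - r\<^sup>2 + (- r)\<^sup>2) / (- p / (r * b) * - r) -
        (Bv\<^sup>2 + Cv\<^sup>2 - 2 * r\<^sup>2) / (Bv * Cv)) (at t)"
      unfolding hB hC by (rule DERIV_cong[OF d2]) (use rp pp bp in \<open>simp add: field_simps power2_eq_square\<close>)
    show "(A3f a has_real_derivative ((- p / (r * b))\<^sup>2 + r\<^sup>2 - (- r)\<^sup>2) / (- p / (r * b) * r) -
        (Bv\<^sup>2 + Cv\<^sup>2 - 2 * (- r)\<^sup>2) / (Bv * Cv)) (at t)"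
      unfolding hB hC by (rule DERIV_cong[OF d3]) (use rp pp bp in \<open>simp add: field_simps power2_eq_square\<close>)
    show "(Bf a has_real_derivative - (Cv * (- p / (r * b)) + Bv * r + Bv * - r) / (Bv * Cv) -
        (Cv\<^sup>2 - Bv\<^sup>2) * (r + - r) / (2 * r * - r * Cv)) (at t)"
      by (rule DERIV_cong[OF dB]) (use rp pp bp Bp Cp in \<open>simp add: field_simps power2_eq_square\<close>)
    show "(Cf a has_real_derivative - (Bv * (- p / (r * b)) + Cv * r + Cv * - r) / (Bv * Cv) -
        (Bv\<^sup>2 - Cv\<^sup>2) * (r + - r) / (2 * r * - r * Bv)) (at t)"
      by (rule DERIV_cong[OF dC]) (use rp pp bp Bp Cp in \<open>simp add: field_simps power2_eq_square\<close>)
  qed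
qed

end


context sas begin

lemma within0:
  assumes "(g has_real_derivative d) (at 0)" and "\<And>t. 0 \<le> t \<Longrightarrow> g t = f t"
  shows "(f has_real_derivative d) (at 0 within {0..})"
  by (rule has_field_derivative_transform_within[OF has_field_derivative_at_within[OF assms(1)], of 1])
     (use assms(2) in auto)

lemma R0: "R 0 = 1" by (simp add: R_def Ti0)

lemma HK: "inverse (H 0) * K 1 = 4"
proof -
  define s where "s = sqrt (1 - a^4)"
  have sp: "0 < s" unfolding s_def using a4 by simp
  have q: "Q 1 = 8 * (1 - a^4)" unfolding Q_def by simp
  have sq: "sqrt (Q 1) = sqrt 8 * s" unfolding s_def by (simp only: q real_sqrt_mult)
  have H0: "H 0 = 2 * s / (sqrt 8 * s)" unfolding H_def by (simp add: sq s_def)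
  have K1: "K 1 = sqrt 8 * s / s" unfolding K_def by (simp add: sq s_def)
  have "sqrt 8 * sqrt 8 = (8::real)" by simp
  then show ?thesis unfolding H0 K1 using sp by (simp add: field_simps)
qed

lemma dg1: "(g1 has_real_derivative -4) (at 0)"
proof -
  obtain k' where k': "\<forall>x. ((\<lambda>t. K (R t)) has_real_derivative k' x) (at x)"
    using Cinf_D[OF Cinf_KR] by blast
  have "((\<lambda>t. Ti t * K (R t)) has_real_derivative inverse (H (Ti 0)) * K (R 0) + k' 0 * Ti 0) (at 0)"
    by (rule DERIV_mult[OF Ti_deriv k'[rule_format]])
  then have "((\<lambda>t. - (Ti t * K (R t))) has_real_derivative - (inverse (H (Ti 0)) * K (R 0) + k' 0 * Ti 0)) (at 0)"
    by (rule DERIV_minus)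
  then show ?thesis unfolding g1_def[abs_def] by (simp add: Ti0 R0 HK)
qed

lemma dgB: "(gB has_real_derivative 0) (at 0)"
proof -
  have "((\<lambda>t. sqrt ((R t)^2 + a^2)) has_real_derivative (R 0 / sqrt ((R 0)^2 + a^2)) * 0) (at 0)"
    by (rule DERIV_chain2[where g=R, OF dFB dR0]) (simp add: R0)
  then show ?thesis unfolding gB_def[abs_def] by simp
qed

lemma dgC: "(gC has_real_derivative 0) (at 0)"
proof -
  have "((\<lambda>t. sqrt ((R t)^2 - a^2)) has_real_derivative (R 0 / sqrt ((R 0)^2 - a^2)) * 0) (at 0)"
    by (rule DERIV_chain2[where g=R, OF dFC dR0]) (simp add: R0)
  then show ?thesis unfolding gC_def[abs_def] by simp
qed

lemma dmR0: "((\<lambda>t. - R t) has_real_derivative 0) (at 0)"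
  using DERIV_minus[OF dR0] by simp

lemma main_part:
  "bij_betw (tfun a) {1..} {0..} \<and>
      extends_smoothly_nonneg (A1f a) \<and> extends_smoothly_nonneg (A2f a) \<and> extends_smoothly_nonneg (A3f a) \<and>
      extends_smoothly_nonneg (Bf a) \<and> extends_smoothly_nonneg (Cf a) \<and>
      A1f a 0 = 0 \<and> (\<exists>d. (A1f a has_real_derivative d) (at 0 within {0..}) \<and> \<bar>d\<bar> = 4) \<and>
      A2f a 0 = - A3f a 0 \<and> A2f a 0 \<noteq> 0 \<and>
      (\<exists>d. (A2f a has_real_derivative d) (at 0 within {0..}) \<and>
           (A3f a has_real_derivative d) (at 0 within {0..})) \<and>
      Bf a 0 \<noteq> 0 \<and> (Bf a has_real_derivative 0) (at 0 within {0..}) \<and>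
      Cf a 0 \<noteq> 0 \<and> (Cf a has_real_derivative 0) (at 0 within {0..}) \<and>
      const_sign_pos (A1f a) \<and> const_sign_pos (A2f a) \<and> const_sign_pos (A3f a) \<and>
      const_sign_pos (Bf a) \<and> const_sign_pos (Cf a)"
proof (intro conjI)
  show "bij_betw (tfun a) {1..} {0..}" by (rule tfun_bij)
  show "extends_smoothly_nonneg (A1f a)" by (rule ext_smooth[OF Cinf_g1]) (simp add: A1_eq)
  show "extends_smoothly_nonneg (A2f a)" by (rule ext_smooth[OF Cinf_R]) (simp add: A2_eq)
  show "extends_smoothly_nonneg (A3f a)" by (rule ext_smooth[OF Cinf_mR]) (simp add: A3_eq)
  show "extends_smoothly_nonneg (Bf a)" by (rule ext_smooth[OF Cinf_gB]) (simp add: B_eq)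
  show "extends_smoothly_nonneg (Cf a)" by (rule ext_smooth[OF Cinf_gC]) (simp add: C_eq)
  show "A1f a 0 = 0" by (simp add: A1_eq g1_def Ti0)
  show "\<exists>d. (A1f a has_real_derivative d) (at 0 within {0..}) \<and> \<bar>d\<bar> = 4"
    by (rule exI[of _ "-4"]) (auto intro: within0[OF dg1] simp: A1_eq)
  show "A2f a 0 = - A3f a 0" by (simp add: A2f_def A3f_def)
  show "A2f a 0 \<noteq> 0" by (simp add: A2_eq R0)
  show "\<exists>d. (A2f a has_real_derivative d) (at 0 within {0..}) \<and>
           (A3f a has_real_derivative d) (at 0 within {0..})"
    by (rule exI[of _ 0]) (auto intro: within0[OF dR0] within0[OF dmR0] simp: A2_eq A3_eq)
  show "Bf a 0 \<noteq> 0" using rB_pos[of 1] by (simp add: B_eq gB_def R0)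
  show "(Bf a has_real_derivative 0) (at 0 within {0..})" by (rule within0[OF dgB]) (simp add: B_eq)
  show "Cf a 0 \<noteq> 0" using rC_pos[of 1] by (simp add: C_eq gC_def R0)
  show "(Cf a has_real_derivative 0) (at 0 within {0..})" by (rule within0[OF dgC]) (simp add: C_eq)
  show "const_sign_pos (A1f a)" unfolding const_sign_pos_def
  proof (rule disjI2, intro allI impI)
    fix t :: real assume t: "0 < t"
    have "0 < Ti t * K (R t)" using Ti_pos[OF t] K_pos[OF R_ge] by simp
    then show "A1f a t < 0" using t by (simp add: A1_eq g1_def)
  qed
  show "const_sign_pos (A2f a)" unfolding const_sign_pos_def
    using R_ge by (intro disjI1 allI impI) (simp add: A2_eq, smt (verit) R_ge)
  show "const_sign_pos (A3f a)" unfolding const_sign_pos_def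
    using R_ge by (intro disjI2 allI impI) (simp add: A3_eq, smt (verit) R_ge)
  show "const_sign_pos (Bf a)" unfolding const_sign_pos_def
    using R_ge rB_pos by (intro disjI1 allI impI) (simp add: B_eq gB_def)
  show "const_sign_pos (Cf a)" unfolding const_sign_pos_def
    using R_ge rC_pos by (intro disjI1 allI impI) (simp add: C_eq gC_def)
qed

end

theorem mainTheorem4:
  fixes \<alpha> :: real
  assumes "0 \<le> \<alpha>" and "\<alpha> < 1"
  shows
   "Pfun \<alpha> 1 = 0 \<and> (\<forall>r>1. Pfun \<alpha> r > 0) \<and> (\<forall>r. Pfun \<alpha> r = 0 \<longrightarrow> r \<le> 1) \<and> 1 > \<alpha> \<and>
    bij_betw (tfun \<alpha>) {1..} {0..} \<and>
    (let A1 = A1f \<alpha>; A2 = A2f \<alpha>; A3 = A3f \<alpha>; B = Bf \<alpha>; C = Cf \<alpha> in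
      (\<forall>t>0.
         (A1 has_real_derivative
            ((A2 t - A3 t)\<^sup>2 - (A1 t)\<^sup>2) / (A2 t * A3 t)
            + (A1 t)\<^sup>2 * ((B t)\<^sup>2 + (C t)\<^sup>2) / ((B t)\<^sup>2 * (C t)\<^sup>2)) (at t) \<and>
         (A2 has_real_derivative
            ((A1 t)\<^sup>2 - (A2 t)\<^sup>2 + (A3 t)\<^sup>2) / (A1 t * A3 t)
            - ((B t)\<^sup>2 + (C t)\<^sup>2 - 2 * (A2 t)\<^sup>2) / (B t * C t)) (at t) \<and>
         (A3 has_real_derivative
            ((A1 t)\<^sup>2 + (A2 t)\<^sup>2 - (A3 t)\<^sup>2) / (A1 t * A2 t)
            - ((B t)\<^sup>2 + (C t)\<^sup>2 - 2 * (A3 t)\<^sup>2) / (B t * C t)) (at t) \<and>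
         (B has_real_derivative
            - (C t * A1 t + B t * A2 t + B t * A3 t) / (B t * C t)
            - ((C t)\<^sup>2 - (B t)\<^sup>2) * (A2 t + A3 t) / (2 * A2 t * A3 t * C t)) (at t) \<and>
         (C has_real_derivative
            - (B t * A1 t + C t * A2 t + C t * A3 t) / (B t * C t)
            - ((B t)\<^sup>2 - (C t)\<^sup>2) * (A2 t + A3 t) / (2 * A2 t * A3 t * B t)) (at t)) \<and>
      extends_smoothly_nonneg A1 \<and> extends_smoothly_nonneg A2 \<and> extends_smoothly_nonneg A3 \<and>
      extends_smoothly_nonneg B \<and> extends_smoothly_nonneg C \<and>
      A1 0 = 0 \<and> (\<exists>d. (A1 has_real_derivative d) (at 0 within {0..}) \<and> \<bar>d\<bar> = 4) \<and>
      A2 0 = - A3 0 \<and> A2 0 \<noteq> 0 \<and>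
      (\<exists>d. (A2 has_real_derivative d) (at 0 within {0..}) \<and>
           (A3 has_real_derivative d) (at 0 within {0..})) \<and>
      B 0 \<noteq> 0 \<and> (B has_real_derivative 0) (at 0 within {0..}) \<and>
      C 0 \<noteq> 0 \<and> (C has_real_derivative 0) (at 0 within {0..}) \<and>
      const_sign_pos A1 \<and> const_sign_pos A2 \<and> const_sign_pos A3 \<and>
      const_sign_pos B \<and> const_sign_pos C)"
proof -
  interpret sas \<alpha> using assms by unfold_locales
  have P1: "Pfun \<alpha> 1 = 0" by (simp add: Pfun_def)
  have P2: "\<forall>r>1. Pfun \<alpha> r > 0"
  proof (intro allI impI)
    fix r :: real assume "1 < r"
    then show "Pfun \<alpha> r > 0" unfolding P_eq using Q_pos[of r] by simp
  qed
  have P3: "\<forall>r. Pfun \<alpha> r = 0 \<longrightarrow> r \<le> 1"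
    using P2 by (metis less_irrefl not_le)
  show ?thesis
    unfolding Let_def
    using P1 P2 P3 assms(2) ode main_part by blast
qed


end
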